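(* Let $R$ be an exchange ring and $e_1,\dots,e_n\in R$ idempotents. Then there exists an idempotent $e\in e_1R+\cdots+e_nR$ such that $e_1R\subseteq eR$ and $e_iR$ is isomorphic to a direct summand of $eR$ for all $i$. In particular, $ReR=Re_1R+\cdots+Re_nR$.
   Context: All rings are unital and modules are right modules. A ring $R$ is an exchange ring if the right module $R_R$ has the finite exchange property: for every module $A$ and internal direct sum decompositions $A=M'\oplus N=A_1\oplus\cdots\oplus A_n$ with $M'\cong R_R$, there exist submodules $A_i'\subseteq A_i$ with $A=M'\oplus A_1'\oplus\cdots\oplus A_n'$ (equivalently: for every $a\in R$ there is an idempotent $e\in aR$ with $1-e\in(1-a)R$). *)

theory Defs
  imports Main
begin

text \<open>Rings: type class ring_1 (unital, not necessarily commutative).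
  Right R-modules that occur are right ideals of R, i.e. submodules of R_R.\<close>

definition idem :: "'a::ring_1 \<Rightarrow> bool" where
  "idem e \<longleftrightarrow> e * e = e"

definition rideal :: "'a::ring_1 \<Rightarrow> 'a set" where
  "rideal a = {a * r | r. True}"

text \<open>Exchange ring, via the elementwise characterization (Nicholson):
  for every a there is an idempotent e in aR with 1 - e in (1 - a)R.\<close>
definition exchange_ring :: "'a::ring_1 itself \<Rightarrow> bool" where
  "exchange_ring TYPE('a) \<longleftrightarrow>
     (\<forall>a::'a. \<exists>e. idem e \<and> e \<in> rideal a \<and> 1 - e \<in> rideal (1 - a))"

definition right_submodule :: "'a::ring_1 set \<Rightarrow> bool" where
  "right_submodule A \<longleftrightarrow> 0 \<in> A \<and> (\<forall>x\<in>A. \<forall>y\<in>A. x + y \<in> A)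
      \<and> (\<forall>x\<in>A. \<forall>r. x * r \<in> A)"

definition rmod_iso :: "'a::ring_1 set \<Rightarrow> 'a set \<Rightarrow> bool" where
  "rmod_iso A B \<longleftrightarrow> (\<exists>f. bij_betw f A B
      \<and> (\<forall>x\<in>A. \<forall>y\<in>A. f (x + y) = f x + f y)
      \<and> (\<forall>x\<in>A. \<forall>r. f (x * r) = f x * r))"

definition direct_summand :: "'a::ring_1 set \<Rightarrow> 'a set \<Rightarrow> bool" where
  "direct_summand A M \<longleftrightarrow> right_submodule A \<and> A \<subseteq> M \<and>
     (\<exists>C. right_submodule C \<and> C \<subseteq> M \<and> A \<inter> C = {0} \<and> M = {a + c | a c. a \<in> A \<and> c \<in> C})"

definition ideal_gen :: "'a::ring_1 set \<Rightarrow> 'a set" where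
  "ideal_gen S = {(\<Sum>j<m. r j * s j * t j) | (m::nat) r s t. \<forall>j<m. s j \<in> S}"

end

theory Submission
  imports Defs
begin

lemma two_step:
  fixes e f :: "'a::ring_1"
  assumes ex: "exchange_ring TYPE('a)" and ee: "e*e = e" and ff: "f*f = f"
  shows "\<exists>h c1 c2. h*h = h \<and> h*e = e \<and> f*h = f \<and> h = e*c1 + f*c2"
proof -
  define u where "u = 1 - e"
  define b where "b = u*f*u"
  have uu: "u*u = u" using ee by (simp add: u_def algebra_simps)
  have ue: "u*e = 0" using ee by (simp add: u_def algebra_simps)
  have eu: "e*u = 0" using ee by (simp add: u_def algebra_simps)
  have uuX: "u*(u*X) = u*X" for X using uu by (metis mult.assoc)
  have ueX: "u*(e*X) = 0" for X using ue by (metis mult.assoc mult_zero_left)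
  have euX: "e*(u*X) = 0" for X using eu by (metis mult.assoc mult_zero_left)
  obtain p where p: "p*p = p" "p \<in> rideal (b+e)" "1 - p \<in> rideal (1 - (b+e))"
    using ex unfolding exchange_ring_def idem_def by blast
  have 1: "1 - (b+e) = u - b" by (simp add: u_def)
  obtain r where pr: "p = (b+e)*r" using p(2) unfolding rideal_def by blast
  obtain s where ps: "1 - p = (u-b)*s" using p(3) unfolding rideal_def 1 by blast
  have eb: "e*b = 0" unfolding b_def using euX by (simp add: mult.assoc)
  have ub: "u*b = b" unfolding b_def using uuX by (simp add: mult.assoc)
  have bu: "b*u = b" unfolding b_def using uu by (simp add: mult.assoc)
  have ep: "e*p = e"
  proof -
    have "e*(1-p) = e*(u-b)*s" using ps by (simp add: mult.assoc)
    also have "\<dots> = 0" using eu eb by (simp add: algebra_simps)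
    finally show ?thesis by (simp add: algebra_simps)
  qed
  define \<epsilon> where "\<epsilon> = u*p*u"
  define z where "z = u*s*u"
  have pup: "p*u*p = p*u"
  proof -
    have "p*u*p = p*p - p*e*p" by (simp add: u_def algebra_simps)
    also have "\<dots> = p - p*e" using p(1) ep by (simp add: mult.assoc)
    finally show ?thesis by (simp add: u_def algebra_simps)
  qed
  have epsi: "\<epsilon>*\<epsilon> = \<epsilon>"
  proof -
    have "\<epsilon>*\<epsilon> = u*(p*(u*u)*p)*u" unfolding \<epsilon>_def by (simp add: mult.assoc)
    also have "\<dots> = u*(p*u)*u" using uu pup by simp
    finally show ?thesis unfolding \<epsilon>_def using uu by (simp add: mult.assoc)
  qed
  have eps_r: "\<epsilon> = u*f*u*r*u"
  proof -
    have "\<epsilon> = u*b*r*u + u*e*r*u" unfolding \<epsilon>_def pr by (simp add: algebra_simps)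
    also have "\<dots> = u*f*u*r*u" using ub ue unfolding b_def by (simp add: mult.assoc)
    finally show ?thesis .
  qed
  have ub2: "u*(u-b) = u - b" using ub uu by (simp add: algebra_simps)
  have bu2: "(u-b)*u = u - b" using bu uu by (simp add: algebra_simps)
  have eps_z: "u - \<epsilon> = (u-b)*z"
  proof -
    have "u - \<epsilon> = u*(1-p)*u" unfolding \<epsilon>_def using uu by (simp add: algebra_simps)
    also have "\<dots> = u*(u-b)*s*u" using ps by (simp add: mult.assoc)
    also have "\<dots> = (u-b)*u*s*u" using ub2 bu2 by simp
    finally show ?thesis unfolding z_def by (simp add: mult.assoc)
  qed
  have eu_e: "\<epsilon>*e = 0" unfolding \<epsilon>_def using ue by (simp add: mult.assoc)
  have zu: "u*z = z" unfolding z_def using uuX by (simp add: mult.assoc)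
  have uepsu: "(u-\<epsilon>)*(u-\<epsilon>) = u - \<epsilon>"
  proof -
    have "u*\<epsilon> = \<epsilon>" "\<epsilon>*u = \<epsilon>" unfolding \<epsilon>_def using uuX uu by (simp_all add: mult.assoc)
    then show ?thesis using uu epsi by (simp add: algebra_simps)
  qed
  define w where "w = (1-f)*z*(u-\<epsilon>)"
  have key: "(u-\<epsilon>)*(1-f)*z = u - \<epsilon>"
  proof -
    have a: "(u-\<epsilon>)*u = u - \<epsilon>" unfolding \<epsilon>_def using uu by (simp add: algebra_simps mult.assoc)
    have "(u-\<epsilon>)*(1-f)*z = (u-\<epsilon>)*u*(1-f)*u*z" using a zu by (simp add: mult.assoc)
    also have "u*(1-f)*u = u - b" unfolding b_def using uu by (simp add: algebra_simps)
    then have "(u-\<epsilon>)*u*(1-f)*u*z = (u-\<epsilon>)*(u-b)*z" by (simp add: mult.assoc)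
    also have "\<dots> = u - \<epsilon>" using eps_z uepsu by (simp add: mult.assoc)
    finally show ?thesis .
  qed
  have ww: "w*w = w"
  proof -
    have "w*w = (1-f)*z*(((u-\<epsilon>)*(1-f)*z)*(u-\<epsilon>))" unfolding w_def by (simp add: mult.assoc)
    also have "\<dots> = w" using key uepsu unfolding w_def by simp
    finally show ?thesis .
  qed
  define h where "h = 1 - w"
  have hh: "h*h = h" unfolding h_def using ww by (simp add: algebra_simps)
  have he: "h*e = e"
  proof -
    have "(u-\<epsilon>)*e = 0" using ue eu_e by (simp add: algebra_simps)
    then have "w*e = 0" unfolding w_def by (simp add: mult.assoc)
    then show ?thesis unfolding h_def by (simp add: algebra_simps)
  qed
  have fh: "f*h = f"
  proof -
    have "f*(1-f) = 0" using ff by (simp add: algebra_simps)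
    then have "f*w = 0" unfolding w_def by (metis mult.assoc mult_zero_left)
    then show ?thesis unfolding h_def by (simp add: algebra_simps)
  qed
  define c1 where "c1 = 1 - f*u*r*u + f*u*z*(u-\<epsilon>)"
  define c2 where "c2 = u*r*u"
  have fz: "f*z = f*u*z" using zu by (simp add: mult.assoc)
  have A: "(u-b)*z*(u-\<epsilon>) = u - \<epsilon>" using eps_z uepsu by simp
  have B: "u - \<epsilon> = z*(u-\<epsilon>) - u*f*u*z*(u-\<epsilon>)"
    using A zu unfolding b_def by (simp add: algebra_simps)
  have hc: "h = e*c1 + f*c2"
  proof -
    define W where "W = z*(u-\<epsilon>)"
    have B': "u - W = \<epsilon> - u*f*u*W" using B unfolding W_def by (simp add: mult.assoc algebra_simps)
    have eX: "X - u*X = e*X" for X by (simp add: u_def algebra_simps)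
    have one: "1 = e + u" by (simp add: u_def)
    have fW: "f*W = f*u*W" unfolding W_def using fz by (metis mult.assoc)
    have "h = 1 - W + f*W" unfolding h_def w_def W_def by (simp add: algebra_simps)
    also have "\<dots> = e + u - W + f*u*W" using one fW by simp
    also have "\<dots> = e + \<epsilon> + (f*u*W - u*(f*u*W))"
      using B' by (simp add: algebra_simps)
    also have "\<dots> = e + \<epsilon> + e*(f*u*W)" using eX by simp
    also have "\<epsilon> = f*u*r*u - e*(f*u*r*u)" using eps_r eX[of "f*u*r*u"] by (simp add: mult.assoc algebra_simps)
    finally show ?thesis unfolding c1_def c2_def W_def by (simp add: algebra_simps)
  qed
  show ?thesis using hh he fh hc by blast
qed

lemma sum_split_add: "sum (f::nat\<Rightarrow>'b::comm_monoid_add) {..<m+k} = sum f {..<m} + sum (\<lambda>i. f (m+i)) {..<k}"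
  by (induction k) (simp_all add: add.assoc)

lemma ig_zero: "0 \<in> ideal_gen S"
  unfolding ideal_gen_def by (rule CollectI, rule exI[of _ 0]) auto

lemma ig_single: "s \<in> S \<Longrightarrow> a*s*c \<in> ideal_gen S"
  unfolding ideal_gen_def
  by (rule CollectI, rule exI[of _ 1], rule exI[of _ "\<lambda>_. a"], rule exI[of _ "\<lambda>_. s"],
      rule exI[of _ "\<lambda>_. c"]) auto

lemma ig_add:
  assumes "x \<in> ideal_gen S" "y \<in> ideal_gen S" shows "x + y \<in> ideal_gen S"
proof -
  obtain m :: nat and r s t where x: "x = (\<Sum>j<m. r j * s j * t j)" "\<forall>j<m. s j \<in> S"
    using assms(1) unfolding ideal_gen_def by blast
  obtain m' :: nat and r' s' t' where y: "y = (\<Sum>j<m'. r' j * s' j * t' j)" "\<forall>j<m'. s' j \<in> S"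
    using assms(2) unfolding ideal_gen_def by blast
  define R where "R j = (if j < m then r j else r' (j - m))" for j
  define S' where "S' j = (if j < m then s j else s' (j - m))" for j
  define T where "T j = (if j < m then t j else t' (j - m))" for j
  have "(\<Sum>j<m+m'. R j * S' j * T j) = x + y"
    unfolding sum_split_add x(1) y(1) R_def S'_def T_def by simp
  moreover have "\<forall>j<m+m'. S' j \<in> S" using x(2) y(2) unfolding S'_def by auto
  ultimately show ?thesis unfolding ideal_gen_def
    by (intro CollectI exI[of _ "m+m'"] exI[of _ R] exI[of _ S'] exI[of _ T]) simp
qed

lemma ig_mult:
  assumes "x \<in> ideal_gen S" shows "a * x * c \<in> ideal_gen S"
proof -
  obtain m :: nat and r s t where x: "x = (\<Sum>j<m. r j * s j * t j)" "\<forall>j<m. s j \<in> S"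
    using assms(1) unfolding ideal_gen_def by blast
  have "a * x * c = (\<Sum>j<m. (a * r j) * s j * (t j * c))"
    unfolding x(1) sum_distrib_left sum_distrib_right by (simp add: mult.assoc)
  then show ?thesis using x(2) unfolding ideal_gen_def
    by (intro CollectI exI[of _ m] exI[of _ "\<lambda>j. a * r j"] exI[of _ s] exI[of _ "\<lambda>j. t j * c"]) simp
qed

lemma ig_sum: "(\<forall>j<(m::nat). F j \<in> ideal_gen S) \<Longrightarrow> (\<Sum>j<m. F j) \<in> ideal_gen S"
  by (induction m) (simp_all add: ig_zero ig_add)

lemma ig_mono: assumes "T \<subseteq> ideal_gen S" shows "ideal_gen T \<subseteq> ideal_gen S"
proof
  fix x assume "x \<in> ideal_gen T"
  then obtain m :: nat and r s t where x: "x = (\<Sum>j<m. r j * s j * t j)" "\<forall>j<m. s j \<in> T"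
    unfolding ideal_gen_def by blast
  have "\<forall>j<m. r j * s j * t j \<in> ideal_gen S" using x(2) assms ig_mult by blast
  then show "x \<in> ideal_gen S" using x(1) ig_sum by simp
qed

definition lesub :: "'a::ring_1 \<Rightarrow> 'a \<Rightarrow> bool" where
  "lesub f g \<longleftrightarrow> (\<exists>x y. x = g*x*f \<and> y = f*y*g \<and> y*x = f)"

lemma idem_ax: "(a::'a::ring_1)*a = a \<Longrightarrow> a*(a*X) = a*X"
  by (metis mult.assoc)

lemma lesub_D:
  fixes f g x :: "'a::ring_1"
  assumes "f*f = f" "g*g = g" "x = g*x*f" shows "g*x = x" "x*f = x"
proof -
  have "g*x = g*(g*x*f)" using arg_cong[OF assms(3), of "\<lambda>t. g*t"] .
  also have "\<dots> = (g*g)*x*f" by (simp add: mult.assoc)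
  also have "\<dots> = g*x*f" using assms(2) by simp
  also have "\<dots> = x" using assms(3) by (rule sym)
  finally show "g*x = x" .
  have "x*f = (g*x*f)*f" using arg_cong[OF assms(3), of "\<lambda>t. t*f"] .
  also have "\<dots> = g*x*f" using assms(1) by (simp add: mult.assoc)
  also have "\<dots> = x" using assms(3) by (rule sym)
  finally show "x*f = x" .
qed

lemma lesub_trans:
  assumes ff: "f*f = f" and gg: "g*g = g" and kk: "k*k = k"
    and l1: "lesub f g" and l2: "lesub g k" shows "lesub f k"
proof -
  obtain x1 y1 where a1: "x1 = g*x1*f" "y1 = f*y1*g" "y1*x1 = f" using l1 unfolding lesub_def by blast
  obtain x2 y2 where a2: "x2 = k*x2*g" "y2 = g*y2*k" "y2*x2 = g" using l2 unfolding lesub_def by blast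
  note b1 = lesub_D[OF ff gg a1(1)] lesub_D[OF gg ff a1(2)]
  note b2 = lesub_D[OF gg kk a2(1)] lesub_D[OF kk gg a2(2)]
  have "k*(x2*x1)*f = (k*x2)*(x1*f)" by (simp add: mult.assoc)
  then have 1: "x2*x1 = k*(x2*x1)*f" using b1 b2 by simp
  have "f*(y1*y2)*k = (f*y1)*(y2*k)" by (simp add: mult.assoc)
  then have 2: "y1*y2 = f*(y1*y2)*k" using b1 b2 by simp
  have "(y1*y2)*(x2*x1) = y1*(y2*x2)*x1" by (simp add: mult.assoc)
  also have "\<dots> = y1*x1" using a2(3) b1 by (simp add: mult.assoc)
  finally have 3: "(y1*y2)*(x2*x1) = f" using a1(3) by simp
  show ?thesis unfolding lesub_def using 1 2 3 by blast
qed

lemma lesub_right: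
  assumes "f*f = f" "h*h = h" "f*h = f" shows "lesub f h"
proof -
  have "h*f = h*(h*f)*f" using assms idem_ax[of h] idem_ax[of f] by (simp add: mult.assoc)
  moreover have "f*h = f*(f*h)*h" using assms idem_ax[of h] idem_ax[of f] by (simp add: mult.assoc)
  moreover have "(f*h)*(h*f) = f" using assms idem_ax[of h] idem_ax[of f] by (simp add: mult.assoc[symmetric])
  ultimately show ?thesis unfolding lesub_def by blast
qed

lemma lesub_left:
  assumes "g*g = g" "h*h = h" "h*g = g" shows "lesub g h"
proof -
  have "g = h*g*g" using assms by (simp add: mult.assoc[symmetric])
  moreover have "g*h = g*(g*h)*h" using assms idem_ax[of h] idem_ax[of g] by (simp add: mult.assoc)
  moreover have "(g*h)*g = g" using assms by (simp add: mult.assoc)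
  ultimately show ?thesis unfolding lesub_def by blast
qed

lemma lesub_refl: "g*g = g \<Longrightarrow> lesub g g"
  unfolding lesub_def by (rule exI[of _ "g"], rule exI[of _ "g"]) simp

lemma lesub_summand:
  fixes f g :: "'a::ring_1"
  assumes ff: "f*f = f" and gg: "g*g = g" and l: "lesub f g"
  shows "\<exists>A. direct_summand A (rideal g) \<and> rmod_iso (rideal f) A"
proof -
  obtain x y where xy: "x = g*x*f" "y = f*y*g" "y*x = f" using l unfolding lesub_def by blast
  define p where "p = x*y"
  note gx = lesub_D(1)[OF ff gg xy(1)] and xf = lesub_D(2)[OF ff gg xy(1)]
  note fy = lesub_D(1)[OF gg ff xy(2)] and yg = lesub_D(2)[OF gg ff xy(2)]
  have "p*p = x*(y*x)*y" unfolding p_def by (simp add: mult.assoc)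
  then have pp: "p*p = p" unfolding p_def using xy(3) xf by simp
  have "g*p = (g*x)*y" unfolding p_def by (simp add: mult.assoc)
  then have gp: "g*p = p" unfolding p_def using gx by simp
  have pg: "p*g = p" unfolding p_def using yg by (simp add: mult.assoc)
  define q where "q = g - p"
  have pq: "p*q = 0" unfolding q_def using pp pg by (simp add: algebra_simps)
  have gq: "g*q = q" unfolding q_def using gg gp by (simp add: algebra_simps)
  have subm: "right_submodule (rideal a)" for a :: 'a
  proof -
    have "0 \<in> rideal a" unfolding rideal_def by (rule CollectI, rule exI[of _ 0], simp)
    moreover have "x1 + y1 \<in> rideal a" if hx: "x1 \<in> rideal a" "y1 \<in> rideal a" for x1 y1
    proof -
      obtain s t where "x1 = a*s" "y1 = a*t" using hx unfolding rideal_def by blast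
      then have "x1 + y1 = a*(s+t)" by (simp add: distrib_left)
      then show ?thesis unfolding rideal_def by blast
    qed
    moreover have "x1 * r \<in> rideal a" if hx: "x1 \<in> rideal a" for x1 r
    proof -
      obtain s where "x1 = a*s" using hx unfolding rideal_def by blast
      then have "x1 * r = a*(s*r)" by (simp add: mult.assoc)
      then show ?thesis unfolding rideal_def by blast
    qed
    ultimately show ?thesis unfolding right_submodule_def by blast
  qed
  have sub: "rideal a \<subseteq> rideal g" if ha: "g*a = a" for a
  proof
    fix z assume "z \<in> rideal a"
    then obtain s where "z = a*s" unfolding rideal_def by blast
    then have "z = g*(a*s)" using ha by (simp add: mult.assoc[symmetric])
    then show "z \<in> rideal g" unfolding rideal_def by blast
  qed
  have ds: "direct_summand (rideal p) (rideal g)"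
    unfolding direct_summand_def
  proof (intro conjI exI[of _ "rideal q"])
    show "right_submodule (rideal p)" "right_submodule (rideal q)" by (rule subm)+
    show "rideal p \<subseteq> rideal g" using sub gp by blast
    show "rideal q \<subseteq> rideal g" using sub gq by blast
    show "rideal p \<inter> rideal q = {0}"
    proof safe
      fix z assume z: "z \<in> rideal p" "z \<in> rideal q"
      obtain a where a: "z = p*a" using z(1) unfolding rideal_def by blast
      obtain c where c: "z = q*c" using z(2) unfolding rideal_def by blast
      have "p*z = (p*p)*a" using a by (simp add: mult.assoc)
      then have "p*z = z" using a pp by simp
      moreover have "p*z = (p*q)*c" using c by (simp add: mult.assoc)
      then have "p*z = 0" using pq by simp
      ultimately show "z = 0" by simp
    next
      show "0 \<in> rideal p" "0 \<in> rideal q" unfolding rideal_def by (auto intro: exI[of _ 0])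
    qed
    show "rideal g = {a + c |a c. a \<in> rideal p \<and> c \<in> rideal q}"
    proof safe
      fix z assume "z \<in> rideal g"
      then obtain t where t: "z = g*t" unfolding rideal_def by blast
      have "z = p*t + q*t" unfolding t q_def by (simp add: algebra_simps)
      then show "\<exists>a c. z = a + c \<and> a \<in> rideal p \<and> c \<in> rideal q" unfolding rideal_def by blast
    next
      fix a c assume "a \<in> rideal p" "c \<in> rideal q"
      then obtain s t where "a = p*s" "c = q*t" unfolding rideal_def by blast
      then have "a + c = g*(p*s + q*t)" using gp gq by (simp add: distrib_left mult.assoc[symmetric])
      then show "a + c \<in> rideal g" unfolding rideal_def by blast
    qed
  qed
  have iso: "rmod_iso (rideal f) (rideal p)"
    unfolding rmod_iso_def
  proof (intro exI[of _ "\<lambda>z. x*z"] conjI ballI allI)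
    show "bij_betw ((*) x) (rideal f) (rideal p)"
    proof (rule bij_betw_imageI)
      show "inj_on ((*) x) (rideal f)"
      proof (rule inj_onI)
        fix a c assume "a \<in> rideal f" "c \<in> rideal f" "x*a = x*c"
        then obtain s t where st: "a = f*s" "c = f*t" unfolding rideal_def by blast
        have "f*a = a" "f*c = c" using st ff by (simp_all add: mult.assoc[symmetric])
        moreover have "y*(x*a) = y*(x*c)" using \<open>x*a = x*c\<close> by simp
        ultimately show "a = c" using xy(3) by (simp add: mult.assoc[symmetric])
      qed
      show "(*) x ` rideal f = rideal p"
      proof safe
        fix z assume "z \<in> rideal f"
        then obtain s where "z = f*s" unfolding rideal_def by blast
        then have "x*z = x*(y*x)*s" using xy(3) xf by (simp add: mult.assoc[symmetric])
        then have "x*z = p*(x*s)" unfolding p_def by (simp add: mult.assoc)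
        then show "x*z \<in> rideal p" unfolding rideal_def by blast
      next
        fix z assume "z \<in> rideal p"
        then obtain s where "z = p*s" unfolding rideal_def by blast
        then have "z = x*((f*y)*s)" unfolding p_def using fy by (simp add: mult.assoc)
        then have "z = x*(f*(y*s))" by (simp add: mult.assoc)
        moreover have "f*(y*s) \<in> rideal f" unfolding rideal_def by blast
        ultimately show "z \<in> (*) x ` rideal f" by blast
      qed
    qed
  qed (simp_all add: distrib_left mult.assoc)
  show ?thesis using ds iso by blast
qed

lemma build:
  fixes es :: "nat \<Rightarrow> 'a::ring_1"
  assumes ex: "exchange_ring TYPE('a)" and idm: "\<forall>i<n. es i * es i = es i"
  shows "0 < k \<Longrightarrow> k \<le> n \<Longrightarrow> \<exists>g. g*g = g \<and> (\<exists>r. g = (\<Sum>i<k. es i * r i))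
     \<and> g * es 0 = es 0 \<and> (\<forall>i<k. lesub (es i) g)"
proof (induction k)
  case 0 thus ?case by simp
next
  case (Suc k)
  show ?case
  proof (cases "k = 0")
    case True
    have e0: "es 0 * es 0 = es 0" using idm Suc.prems by auto
    have "es 0 = (\<Sum>i<Suc k. es i * (\<lambda>_. 1) i)" using True by simp
    then show ?thesis using True e0 lesub_refl[OF e0]
      by (intro exI[of _ "es 0"] conjI exI[of _ "\<lambda>_. 1"]) auto
  next
    case False
    then obtain g r where g: "g*g = g" "g = (\<Sum>i<k. es i * r i)" "g * es 0 = es 0"
        "\<forall>i<k. lesub (es i) g"
      using Suc by auto
    have ek: "es k * es k = es k" using idm Suc.prems by auto
    obtain h c1 c2 where h: "h*h = h" "h*g = g" "es k * h = es k" "h = g*c1 + es k * c2"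
      using two_step[OF ex g(1) ek] by blast
    define r' where "r' i = (if i < k then r i * c1 else c2)" for i
    have "h = (\<Sum>i<Suc k. es i * r' i)"
      unfolding h(4) g(2) r'_def by (simp add: sum_distrib_right mult.assoc)
    moreover have "h * es 0 = es 0" using h(2) g(3) by (metis mult.assoc)
    moreover have "\<forall>i<Suc k. lesub (es i) h"
    proof (intro allI impI)
      fix i assume i: "i < Suc k"
      show "lesub (es i) h"
      proof (cases "i < k")
        case True
        have ei: "es i * es i = es i" using idm Suc.prems True by auto
        show ?thesis using lesub_trans[OF ei g(1) h(1)] g(4) True lesub_left[OF g(1) h(1) h(2)] by blast
      next
        case False
        then have "i = k" using i by simp
        then show ?thesis using lesub_right[OF ek h(1) h(3)] by simp
      qed
    qed
    ultimately show ?thesis using h(1) by blast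
  qed
qed

theorem lemma2p1:
  fixes es :: "nat \<Rightarrow> 'a::ring_1" and n :: nat
  assumes "exchange_ring TYPE('a)"
    and "0 < n"
    and "\<forall>i<n. idem (es i)"
  shows "\<exists>e. idem e
      \<and> e \<in> {(\<Sum>i<n. es i * r i) | r. True}
      \<and> rideal (es 0) \<subseteq> rideal e
      \<and> (\<forall>i<n. \<exists>A. direct_summand A (rideal e) \<and> rmod_iso (rideal (es i)) A)
      \<and> ideal_gen {e} = ideal_gen (es ` {..<n})"
proof -
  have idm: "\<forall>i<n. es i * es i = es i" using assms(3) unfolding idem_def by blast
  obtain g r where g: "g*g = g" "g = (\<Sum>i<n. es i * r i)" "g * es 0 = es 0"
      "\<forall>i<n. lesub (es i) g"
    using build[OF assms(1) idm assms(2) order_refl] by blast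
  have 1: "rideal (es 0) \<subseteq> rideal g"
  proof
    fix z assume "z \<in> rideal (es 0)"
    then obtain s where "z = es 0 * s" unfolding rideal_def by blast
    then have "z = g * (es 0 * s)" using g(3) by (simp add: mult.assoc[symmetric])
    then show "z \<in> rideal g" unfolding rideal_def by blast
  qed
  have 2: "\<forall>i<n. \<exists>A. direct_summand A (rideal g) \<and> rmod_iso (rideal (es i)) A"
    using lesub_summand[OF _ g(1)] idm g(4) by blast
  have 3: "ideal_gen {g} \<subseteq> ideal_gen (es ` {..<n})"
  proof (rule ig_mono)
    have "\<forall>j<n. 1 * es j * r j \<in> ideal_gen (es ` {..<n})" by (intro allI impI ig_single) auto
    then have "g \<in> ideal_gen (es ` {..<n})" using ig_sum[of n "\<lambda>j. 1 * es j * r j"] g(2) by simp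
    then show "{g} \<subseteq> ideal_gen (es ` {..<n})" by simp
  qed
  have 4: "ideal_gen (es ` {..<n}) \<subseteq> ideal_gen {g}"
  proof (rule ig_mono, rule subsetI)
    fix z assume "z \<in> es ` {..<n}"
    then obtain i where i: "i < n" "z = es i" by auto
    then obtain x y where xy: "x = g*x*es i" "y = es i*y*g" "y*x = es i"
      using g(4) unfolding lesub_def by auto
    have "es i = (es i * y) * g * x" using xy(2,3) by (metis mult.assoc)
    then show "z \<in> ideal_gen {g}" unfolding i(2) using ig_single[of g "{g}" "es i * y" x] by simp
  qed
  show ?thesis unfolding idem_def using g(1) g(2) 1 2 3 4 by blast
qed

end
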